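(* For any finite group $G$, we have $\alpha_{G,n}\sim |Z(G)|\,|G|^{n-1}$ and $\beta_{G,n}\sim C a^n$ as $n\to\infty$, where $a$ is the maximal cardinality of an abelian subgroup of $G$ and $C$ is some positive constant (depending on $G$). Here $a_n\sim b_n$ means $\lim_{n\to\infty}a_n/b_n=1$.
   Context: For a finite group $G$ and an integer $n\ge 0$, $G$ acts on $G^n$ by simultaneous conjugation $g\cdot(x_1,\dots,x_n)=(gx_1g^{-1},\dots,gx_ng^{-1})$. Let $G^{(n)}=\{(x_1,\dots,x_n)\in G^n : x_ix_j=x_jx_i \text{ for all } 1\le i,j\le n\}$, which is stable under this action. Let $\alpha_{G,n}$ be the number of $G$-orbits on $G^n$ and $\beta_{G,n}$ the number of $G$-orbits on $G^{(n)}$. $Z(G)$ denotes the center of $G$. *)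

theory Defs
  imports "HOL-Analysis.Analysis" "HOL-Algebra.Group"
begin

definition grp_center :: "('a, 'b) monoid_scheme \<Rightarrow> 'a set" where
  "grp_center G = {z \<in> carrier G. \<forall>g \<in> carrier G. z \<otimes>\<^bsub>G\<^esub> g = g \<otimes>\<^bsub>G\<^esub> z}"

definition tuples :: "('a, 'b) monoid_scheme \<Rightarrow> nat \<Rightarrow> (nat \<Rightarrow> 'a) set" where
  "tuples G n = {0..<n} \<rightarrow>\<^sub>E carrier G"

definition comm_tuples :: "('a, 'b) monoid_scheme \<Rightarrow> nat \<Rightarrow> (nat \<Rightarrow> 'a) set" where
  "comm_tuples G n = {x \<in> tuples G n. \<forall>i<n. \<forall>j<n. x i \<otimes>\<^bsub>G\<^esub> x j = x j \<otimes>\<^bsub>G\<^esub> x i}"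

definition conj_tuple :: "('a, 'b) monoid_scheme \<Rightarrow> nat \<Rightarrow> 'a \<Rightarrow> (nat \<Rightarrow> 'a) \<Rightarrow> (nat \<Rightarrow> 'a)" where
  "conj_tuple G n g x = (\<lambda>i\<in>{0..<n}. g \<otimes>\<^bsub>G\<^esub> x i \<otimes>\<^bsub>G\<^esub> inv\<^bsub>G\<^esub> g)"

definition conj_orbit :: "('a, 'b) monoid_scheme \<Rightarrow> nat \<Rightarrow> (nat \<Rightarrow> 'a) \<Rightarrow> (nat \<Rightarrow> 'a) set" where
  "conj_orbit G n x = (\<lambda>g. conj_tuple G n g x) ` carrier G"

definition num_orbits :: "('a, 'b) monoid_scheme \<Rightarrow> nat \<Rightarrow> (nat \<Rightarrow> 'a) set \<Rightarrow> nat" where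
  "num_orbits G n X = card (conj_orbit G n ` X)"

definition alpha :: "('a, 'b) monoid_scheme \<Rightarrow> nat \<Rightarrow> nat" where
  "alpha G n = num_orbits G n (tuples G n)"

definition beta :: "('a, 'b) monoid_scheme \<Rightarrow> nat \<Rightarrow> nat" where
  "beta G n = num_orbits G n (comm_tuples G n)"

definition max_abelian_card :: "('a, 'b) monoid_scheme \<Rightarrow> nat" where
  "max_abelian_card G = Max {card H | H. subgroup H G \<and>
      (\<forall>x\<in>H. \<forall>y\<in>H. x \<otimes>\<^bsub>G\<^esub> y = y \<otimes>\<^bsub>G\<^esub> x)}"

end

theory Submission
  imports Defs "HOL-Algebra.Group_Action"
begin

definition cen :: "('a, 'b) monoid_scheme \<Rightarrow> 'a set \<Rightarrow> 'a set" where
  "cen G Y = {h \<in> carrier G. \<forall>y\<in>Y. h \<otimes>\<^bsub>G\<^esub> y = y \<otimes>\<^bsub>G\<^esub> h}"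

context group
begin

lemma conj_fix_iff:
  assumes "g \<in> carrier G" "h \<in> carrier G"
  shows "g \<otimes> h \<otimes> inv g = h \<longleftrightarrow> g \<otimes> h = h \<otimes> g"
proof
  assume "g \<otimes> h \<otimes> inv g = h"
  then have "g \<otimes> h \<otimes> inv g \<otimes> g = h \<otimes> g" by simp
  then show "g \<otimes> h = h \<otimes> g" using assms by (simp add: m_assoc)
next
  assume "g \<otimes> h = h \<otimes> g"
  then show "g \<otimes> h \<otimes> inv g = h" using assms by (simp add: m_assoc)
qed

lemma cen_subgroup:
  assumes "Y \<subseteq> carrier G"
  shows "subgroup (cen G Y) G"
proof
  show "cen G Y \<subseteq> carrier G" unfolding cen_def by auto
  show "\<one> \<in> cen G Y" unfolding cen_def using assms by auto
  fix h k assume h: "h \<in> cen G Y"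
  then have hc: "h \<in> carrier G" and hy: "\<And>y. y \<in> Y \<Longrightarrow> h \<otimes> y = y \<otimes> h" unfolding cen_def by auto
  { assume k: "k \<in> cen G Y"
    then have kc: "k \<in> carrier G" and ky: "\<And>y. y \<in> Y \<Longrightarrow> k \<otimes> y = y \<otimes> k" unfolding cen_def by auto
    have "h \<otimes> k \<otimes> y = y \<otimes> (h \<otimes> k)" if "y \<in> Y" for y
    proof -
      have yc: "y \<in> carrier G" using that assms by auto
      have "h \<otimes> k \<otimes> y = h \<otimes> (y \<otimes> k)" using ky[OF that] hc kc yc by (simp add: m_assoc)
      also have "\<dots> = (h \<otimes> y) \<otimes> k" using hc kc yc by (simp add: m_assoc)
      also have "\<dots> = y \<otimes> (h \<otimes> k)" using hy[OF that] hc kc yc by (simp add: m_assoc)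
      finally show ?thesis .
    qed
    then show "h \<otimes> k \<in> cen G Y" unfolding cen_def using hc kc by auto }
  have "inv h \<otimes> y = y \<otimes> inv h" if "y \<in> Y" for y
  proof -
    have yc: "y \<in> carrier G" using that assms by auto
    have "inv h \<otimes> y = inv h \<otimes> (y \<otimes> h) \<otimes> inv h" using hc yc by (simp add: m_assoc)
    also have "\<dots> = inv h \<otimes> (h \<otimes> y) \<otimes> inv h" using hy[OF that] by simp
    also have "\<dots> = y \<otimes> inv h" using hc yc by (simp add: m_assoc[symmetric])
    finally show ?thesis .
  qed
  then show "inv h \<in> cen G Y" unfolding cen_def using hc by auto
qed

lemma cen_anti: "Y \<subseteq> Y' \<Longrightarrow> cen G Y' \<subseteq> cen G Y"
  unfolding cen_def by auto

lemma cen_sym: "X \<subseteq> carrier G \<Longrightarrow> X \<subseteq> cen G Y \<Longrightarrow> Y \<inter> carrier G \<subseteq> cen G X"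
  unfolding cen_def by auto

lemma double_cen:
  assumes X: "X \<subseteq> carrier G" and comm: "\<forall>u\<in>X. \<forall>v\<in>X. u \<otimes> v = v \<otimes> u"
  shows "subgroup (cen G (cen G X)) G" "X \<subseteq> cen G (cen G X)"
    "\<forall>u\<in>cen G (cen G X). \<forall>v\<in>cen G (cen G X). u \<otimes> v = v \<otimes> u"
proof -
  show "subgroup (cen G (cen G X)) G" by (rule cen_subgroup) (auto simp: cen_def)
  show XH: "X \<subseteq> cen G (cen G X)" using X unfolding cen_def by auto
  have XC: "X \<subseteq> cen G X" using X comm unfolding cen_def by auto
  have "cen G (cen G X) \<subseteq> cen G X" using cen_anti[OF XC] .
  then show "\<forall>u\<in>cen G (cen G X). \<forall>v\<in>cen G (cen G X). u \<otimes> v = v \<otimes> u"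
    unfolding cen_def by blast
qed

lemma double_cen_sub:
  assumes "X \<subseteq> cen G Y" "Y \<subseteq> carrier G"
  shows "cen G (cen G X) \<subseteq> cen G Y"
proof -
  have "Y \<subseteq> cen G X" using assms unfolding cen_def by auto
  then show ?thesis by (rule cen_anti)
qed

lemma conj_tuple_mult:
  assumes "g \<in> carrier G" "h \<in> carrier G" "x \<in> tuples G n"
  shows "conj_tuple G n (g \<otimes> h) x = conj_tuple G n g (conj_tuple G n h x)"
proof
  fix i show "conj_tuple G n (g \<otimes> h) x i = conj_tuple G n g (conj_tuple G n h x) i"
  proof (cases "i < n")
    case True
    then have "x i \<in> carrier G" using assms(3) unfolding tuples_def by auto
    then show ?thesis using True assms by (simp add: conj_tuple_def m_assoc inv_mult_group)
  qed (simp add: conj_tuple_def)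
qed

lemma conj_tuple_one:
  assumes "x \<in> tuples G n"
  shows "conj_tuple G n \<one> x = x"
proof
  fix i show "conj_tuple G n \<one> x i = x i"
  proof (cases "i < n")
    case True
    then have "x i \<in> carrier G" using assms unfolding tuples_def by auto
    then show ?thesis using True by (simp add: conj_tuple_def)
  qed (use assms in \<open>auto simp: conj_tuple_def tuples_def PiE_def extensional_def\<close>)
qed

lemma conj_tuple_closed:
  assumes "g \<in> carrier G" "x \<in> tuples G n"
  shows "conj_tuple G n g x \<in> tuples G n"
  using assms unfolding tuples_def conj_tuple_def by auto

lemma conj_comm_closed:
  assumes "g \<in> carrier G" "x \<in> comm_tuples G n"
  shows "conj_tuple G n g x \<in> comm_tuples G n"
proof -
  have xt: "x \<in> tuples G n" using assms unfolding comm_tuples_def by auto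
  have "conj_tuple G n g x i \<otimes> conj_tuple G n g x j = conj_tuple G n g x j \<otimes> conj_tuple G n g x i"
    if "i < n" "j < n" for i j
  proof -
    have c: "x i \<in> carrier G" "x j \<in> carrier G" using xt that unfolding tuples_def by auto
    have e: "x i \<otimes> x j = x j \<otimes> x i" using assms that unfolding comm_tuples_def by auto
    have "g \<otimes> x i \<otimes> inv g \<otimes> (g \<otimes> x j \<otimes> inv g) = g \<otimes> (x i \<otimes> x j) \<otimes> inv g"
      using c assms by (simp add: m_assoc[symmetric]) (simp add: m_assoc)
    also have "\<dots> = g \<otimes> (x j \<otimes> x i) \<otimes> inv g" using e by simp
    also have "\<dots> = g \<otimes> x j \<otimes> inv g \<otimes> (g \<otimes> x i \<otimes> inv g)"
      using c assms by (simp add: m_assoc[symmetric]) (simp add: m_assoc)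
    finally show ?thesis using that by (simp add: conj_tuple_def)
  qed
  then show ?thesis using conj_tuple_closed[OF assms(1) xt] unfolding comm_tuples_def by auto
qed

end

context group
begin

lemma conj_tuple_inv:
  assumes "g \<in> carrier G" "x \<in> tuples G n"
  shows "conj_tuple G n (inv g) (conj_tuple G n g x) = x"
  using conj_tuple_mult[of "inv g" g x n] conj_tuple_one[of x n] assms by simp

lemma conj_action:
  assumes sub: "E \<subseteq> tuples G n"
    and cl: "\<And>g x. g \<in> carrier G \<Longrightarrow> x \<in> E \<Longrightarrow> conj_tuple G n g x \<in> E"
  shows "group_action G E (\<lambda>g. restrict (conj_tuple G n g) E)"
proof -
  let ?\<phi> = "\<lambda>g. restrict (conj_tuple G n g) E"
  have bij: "?\<phi> g \<in> Bij E" if g: "g \<in> carrier G" for g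
  proof -
    have "inj_on (conj_tuple G n g) E"
      by (rule inj_on_inverseI[where g = "conj_tuple G n (inv g)"]) (use conj_tuple_inv g sub in blast)
    moreover have "conj_tuple G n g ` E = E"
    proof
      show "conj_tuple G n g ` E \<subseteq> E" using cl g by auto
      show "E \<subseteq> conj_tuple G n g ` E"
      proof
        fix y assume y: "y \<in> E"
        have "y = conj_tuple G n g (conj_tuple G n (inv g) y)"
          using conj_tuple_inv[of "inv g" y n] g y sub by auto
        then show "y \<in> conj_tuple G n g ` E" using cl[of "inv g" y] g y by auto
      qed
    qed
    ultimately show ?thesis unfolding Bij_def bij_betw_def by auto
  qed
  have hom: "?\<phi> \<in> hom G (BijGroup E)"
  proof (rule homI)
    show "?\<phi> g \<in> carrier (BijGroup E)" if "g \<in> carrier G" for g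
      using bij[OF that] by (simp add: BijGroup_def)
    show "?\<phi> (g \<otimes> h) = ?\<phi> g \<otimes>\<^bsub>BijGroup E\<^esub> ?\<phi> h" if g: "g \<in> carrier G" and h: "h \<in> carrier G" for g h
    proof -
      have "?\<phi> g \<otimes>\<^bsub>BijGroup E\<^esub> ?\<phi> h = compose E (?\<phi> g) (?\<phi> h)"
        using bij[OF g] bij[OF h] by (simp add: BijGroup_def)
      also have "\<dots> = ?\<phi> (g \<otimes> h)"
      proof
        fix x show "compose E (?\<phi> g) (?\<phi> h) x = ?\<phi> (g \<otimes> h) x"
          using conj_tuple_mult[OF g h, of x n] cl[OF h, of x] sub
          by (auto simp: compose_def)
      qed
      finally show ?thesis by simp
    qed
  qed
  show ?thesis unfolding group_action_def group_hom_def group_hom_axioms_def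
    using hom group_BijGroup is_group by auto
qed

lemma burnside_conj:
  assumes fin: "finite (carrier G)"
    and sub: "E \<subseteq> tuples G n"
    and cl: "\<And>g x. g \<in> carrier G \<Longrightarrow> x \<in> E \<Longrightarrow> conj_tuple G n g x \<in> E"
  shows "num_orbits G n E * card (carrier G) =
    (\<Sum>g\<in>carrier G. card {x \<in> E. conj_tuple G n g x = x})"
proof -
  interpret A: group_action G E "\<lambda>g. restrict (conj_tuple G n g) E"
    by (rule conj_action[OF sub cl])
  have finE: "finite E"
  proof (rule finite_subset[OF sub])
    show "finite (tuples G n)" unfolding tuples_def using fin by (simp add: finite_PiE)
  qed
  have orb: "orbits G E (\<lambda>g. restrict (conj_tuple G n g) E) = conj_orbit G n ` E"
    unfolding orbits_def orbit_def conj_orbit_def by auto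
  have inv: "invariants E (\<lambda>g. restrict (conj_tuple G n g) E) g = {x \<in> E. conj_tuple G n g x = x}" for g
    unfolding invariants_def by auto
  show ?thesis using A.burnside[OF fin finE] unfolding orb inv num_orbits_def order_def .
qed

end

definition ctup :: "('a, 'b) monoid_scheme \<Rightarrow> nat \<Rightarrow> 'a set \<Rightarrow> (nat \<Rightarrow> 'a) set" where
  "ctup G n S = {x \<in> {0..<n} \<rightarrow>\<^sub>E S. \<forall>i<n. \<forall>j<n. x i \<otimes>\<^bsub>G\<^esub> x j = x j \<otimes>\<^bsub>G\<^esub> x i}"

context group
begin

lemma conj_fix_tuple_iff:
  assumes g: "g \<in> carrier G" and x: "x \<in> tuples G n"
  shows "conj_tuple G n g x = x \<longleftrightarrow> x \<in> {0..<n} \<rightarrow>\<^sub>E cen G {g}"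
proof -
  have xc: "\<And>i. i < n \<Longrightarrow> x i \<in> carrier G"
    using x unfolding tuples_def by auto
  have xe: "\<And>i. i \<ge> n \<Longrightarrow> x i = undefined"
  proof -
    fix i :: nat assume "i \<ge> n"
    then have "i \<notin> {0..<n}" by simp
    then show "x i = undefined" by (rule PiE_arb[OF x[unfolded tuples_def]])
  qed
  have "conj_tuple G n g x = x \<longleftrightarrow> (\<forall>i<n. g \<otimes> x i \<otimes> inv g = x i)"
    unfolding conj_tuple_def fun_eq_iff using xe by (auto simp: not_less)
  also have "\<dots> \<longleftrightarrow> (\<forall>i<n. g \<otimes> x i = x i \<otimes> g)"
    by (simp add: conj_fix_iff[OF g xc])
  also have "\<dots> \<longleftrightarrow> x \<in> {0..<n} \<rightarrow>\<^sub>E cen G {g}"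
  proof -
    have ext: "x \<in> extensional {0..<n}" using x unfolding tuples_def by (simp add: PiE_iff)
    have "x \<in> {0..<n} \<rightarrow>\<^sub>E cen G {g} \<longleftrightarrow> (\<forall>i<n. x i \<in> cen G {g})"
      by (auto simp: PiE_iff ext)
    also have "\<dots> \<longleftrightarrow> (\<forall>i<n. g \<otimes> x i = x i \<otimes> g)"
      unfolding cen_def using xc by auto
    finally show ?thesis by simp
  qed
  finally show ?thesis .
qed

lemma cen_single_sub: "cen G {g} \<subseteq> carrier G" unfolding cen_def by auto

lemma fix_tuples:
  assumes "g \<in> carrier G"
  shows "{x \<in> tuples G n. conj_tuple G n g x = x} = {0..<n} \<rightarrow>\<^sub>E cen G {g}"
proof
  show "{x \<in> tuples G n. conj_tuple G n g x = x} \<subseteq> {0..<n} \<rightarrow>\<^sub>E cen G {g}"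
    using conj_fix_tuple_iff[OF assms] by blast
  have "{0..<n} \<rightarrow>\<^sub>E cen G {g} \<subseteq> tuples G n"
    unfolding tuples_def by (rule PiE_mono) (use cen_single_sub in auto)
  then show "{0..<n} \<rightarrow>\<^sub>E cen G {g} \<subseteq> {x \<in> tuples G n. conj_tuple G n g x = x}"
    using conj_fix_tuple_iff[OF assms] by blast
qed

lemma fix_comm_tuples:
  assumes "g \<in> carrier G"
  shows "{x \<in> comm_tuples G n. conj_tuple G n g x = x} = ctup G n (cen G {g})"
proof -
  have "{x \<in> comm_tuples G n. conj_tuple G n g x = x} =
     {x \<in> {x \<in> tuples G n. conj_tuple G n g x = x}. \<forall>i<n. \<forall>j<n. x i \<otimes> x j = x j \<otimes> x i}"
    unfolding comm_tuples_def by auto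
  then show ?thesis unfolding fix_tuples[OF assms] ctup_def by simp
qed

lemma alpha_formula:
  assumes fin: "finite (carrier G)"
  shows "alpha G n * card (carrier G) = (\<Sum>g\<in>carrier G. card (cen G {g}) ^ n)"
proof -
  have "alpha G n * card (carrier G) = (\<Sum>g\<in>carrier G. card {x \<in> tuples G n. conj_tuple G n g x = x})"
    unfolding alpha_def by (rule burnside_conj[OF fin]) (auto intro: conj_tuple_closed)
  also have "\<dots> = (\<Sum>g\<in>carrier G. card (cen G {g}) ^ n)"
    by (rule sum.cong) (auto simp: fix_tuples card_PiE)
  finally show ?thesis .
qed

lemma beta_formula:
  assumes fin: "finite (carrier G)"
  shows "beta G n * card (carrier G) = (\<Sum>g\<in>carrier G. card (ctup G n (cen G {g})))"
proof -
  have "beta G n * card (carrier G) = (\<Sum>g\<in>carrier G. card {x \<in> comm_tuples G n. conj_tuple G n g x = x})"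
    unfolding beta_def by (rule burnside_conj[OF fin _ conj_comm_closed]) (auto simp: comm_tuples_def)
  also have "\<dots> = (\<Sum>g\<in>carrier G. card (ctup G n (cen G {g})))"
    by (rule sum.cong) (auto simp: fix_comm_tuples)
  finally show ?thesis .
qed

end

context group
begin

lemma one_in_center: "\<one> \<in> grp_center G"
  unfolding grp_center_def by auto

lemma center_sub: "grp_center G \<subseteq> carrier G"
  unfolding grp_center_def by auto

lemma cen_center:
  assumes "g \<in> grp_center G" shows "cen G {g} = carrier G"
  using assms unfolding grp_center_def cen_def by auto

lemma cen_noncenter_card:
  assumes fin: "finite (carrier G)" and g: "g \<in> carrier G" "g \<notin> grp_center G"
  shows "card (cen G {g}) < card (carrier G)"
proof -
  have "cen G {g} \<noteq> carrier G"
  proof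
    assume eq: "cen G {g} = carrier G"
    obtain h where h: "h \<in> carrier G" "g \<otimes> h \<noteq> h \<otimes> g"
      using g unfolding grp_center_def by auto
    have "h \<in> cen G {g}" using eq h by simp
    then show False using h unfolding cen_def by auto
  qed
  then have "cen G {g} \<subset> carrier G" using cen_single_sub by auto
  then show ?thesis using fin by (rule psubset_card_mono[rotated])
qed

lemma alpha_limit:
  assumes fin: "finite (carrier G)"
  shows "(\<lambda>n. real (alpha G n) /
            (real (card (grp_center G)) * real (card (carrier G)) ^ (n - 1))) \<longlonglongrightarrow> 1"
proof -
  define N where "N = real (card (carrier G))"
  define z where "z = real (card (grp_center G))"
  have Npos: "N > 0" unfolding N_def using fin by (auto simp: card_gt_0_iff)
  have zpos: "z > 0" unfolding z_def using one_in_center finite_subset[OF center_sub fin]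
    by (auto simp: card_gt_0_iff)
  have lim: "(\<lambda>n. \<Sum>g\<in>carrier G. (real (card (cen G {g})) / N) ^ n) \<longlonglongrightarrow>
      (\<Sum>g\<in>carrier G. if g \<in> grp_center G then 1 else 0)"
  proof (rule tendsto_sum)
    fix g assume g: "g \<in> carrier G"
    show "(\<lambda>n. (real (card (cen G {g})) / N) ^ n) \<longlonglongrightarrow> (if g \<in> grp_center G then 1 else 0)"
    proof (cases "g \<in> grp_center G")
      case True
      then show ?thesis using Npos by (simp add: cen_center N_def)
    next
      case False
      have "card (cen G {g}) < card (carrier G)" using cen_noncenter_card[OF fin g False] .
      then have "real (card (cen G {g})) / N < 1" using Npos unfolding N_def by simp
      then show ?thesis using False Npos by (simp add: LIMSEQ_realpow_zero)
    qed
  qed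
  have "(\<Sum>g\<in>carrier G. if g \<in> grp_center G then 1 else 0) = (\<Sum>g\<in>grp_center G. (1::real))"
    using center_sub fin by (simp add: sum.If_cases Int_absorb1)
  also have "\<dots> = z" unfolding z_def by simp
  finally have lim': "(\<lambda>n. \<Sum>g\<in>carrier G. (real (card (cen G {g})) / N) ^ n) \<longlonglongrightarrow> z"
    using lim by simp
  have "(\<lambda>n. (\<Sum>g\<in>carrier G. (real (card (cen G {g})) / N) ^ n) / z) \<longlonglongrightarrow> z / z"
    using zpos by (intro tendsto_divide[OF lim' tendsto_const]) simp
  then have lim2: "(\<lambda>n. (\<Sum>g\<in>carrier G. (real (card (cen G {g})) / N) ^ n) / z) \<longlonglongrightarrow> 1"
    using zpos by simp
  have ev: "\<forall>\<^sub>F n in sequentially. (\<Sum>g\<in>carrier G. (real (card (cen G {g})) / N) ^ n) / z =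
      real (alpha G n) / (z * N ^ (n - 1))"
  proof (rule eventually_sequentiallyI[of 1])
    fix n :: nat assume n: "n \<ge> 1"
    have "real (alpha G n) * N = real (alpha G n * card (carrier G))"
      unfolding N_def by simp
    also have "\<dots> = real (\<Sum>g\<in>carrier G. card (cen G {g}) ^ n)"
      by (simp only: alpha_formula[OF fin])
    also have "\<dots> = (\<Sum>g\<in>carrier G. real (card (cen G {g})) ^ n)" by simp
    finally have a: "real (alpha G n) * N = (\<Sum>g\<in>carrier G. real (card (cen G {g})) ^ n)" .
    have p: "N ^ (n - 1) * N = N ^ n" using n by (cases n) (simp_all add: mult.commute)
    have "(\<Sum>g\<in>carrier G. (real (card (cen G {g})) / N) ^ n) = (\<Sum>g\<in>carrier G. real (card (cen G {g})) ^ n) / N ^ n"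
      by (simp add: power_divide sum_divide_distrib)
    also have "\<dots> = real (alpha G n) * N / (N ^ (n - 1) * N)" using a p by simp
    also have "\<dots> = real (alpha G n) / N ^ (n - 1)" using Npos by simp
    finally show "(\<Sum>g\<in>carrier G. (real (card (cen G {g})) / N) ^ n) / z =
      real (alpha G n) / (z * N ^ (n - 1))" by (simp add: divide_divide_eq_left mult.commute)
  qed
  have "(\<lambda>n. real (alpha G n) / (z * N ^ (n - 1))) \<longlonglongrightarrow> 1"
    using tendsto_cong[OF ev] lim2 by simp
  then show ?thesis unfolding N_def z_def .
qed

end

definition abel :: "('a, 'b) monoid_scheme \<Rightarrow> 'a set \<Rightarrow> bool" where
  "abel G H = (\<forall>x\<in>H. \<forall>y\<in>H. x \<otimes>\<^bsub>G\<^esub> y = y \<otimes>\<^bsub>G\<^esub> x)"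

definition maxab :: "('a, 'b) monoid_scheme \<Rightarrow> 'a set \<Rightarrow> 'a set set" where
  "maxab G S = {A. subgroup A G \<and> abel G A \<and> card A = max_abelian_card G \<and> A \<subseteq> S}"

context group
begin

lemma abel_card_set_finite:
  assumes fin: "finite (carrier G)"
  shows "finite {card H | H. subgroup H G \<and> (\<forall>x\<in>H. \<forall>y\<in>H. x \<otimes> y = y \<otimes> x)}"
proof (rule finite_subset)
  show "{card H | H. subgroup H G \<and> (\<forall>x\<in>H. \<forall>y\<in>H. x \<otimes> y = y \<otimes> x)} \<subseteq> {..card (carrier G)}"
  proof
    fix k assume "k \<in> {card H | H. subgroup H G \<and> (\<forall>x\<in>H. \<forall>y\<in>H. x \<otimes> y = y \<otimes> x)}"
    then obtain H where k: "k = card H" and H: "subgroup H G" by blast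
    have "H \<subseteq> carrier G" using H by (rule subgroup.subset)
    then show "k \<in> {..card (carrier G)}" using fin k card_mono by auto
  qed
qed simp

lemma max_abelian_ge:
  assumes fin: "finite (carrier G)" and "subgroup H G" "abel G H"
  shows "card H \<le> max_abelian_card G"
  unfolding max_abelian_card_def
  by (rule Max_ge[OF abel_card_set_finite[OF fin]]) (use assms in \<open>auto simp: abel_def\<close>)

lemma max_abelian_ex:
  assumes fin: "finite (carrier G)"
  shows "\<exists>A. subgroup A G \<and> abel G A \<and> card A = max_abelian_card G"
proof -
  have "subgroup (cen G (cen G {})) G" "\<forall>u\<in>cen G (cen G {}). \<forall>v\<in>cen G (cen G {}). u \<otimes> v = v \<otimes> u"
    using double_cen[of "{}"] by auto
  then have ne: "{card H | H. subgroup H G \<and> (\<forall>x\<in>H. \<forall>y\<in>H. x \<otimes> y = y \<otimes> x)} \<noteq> {}" by blast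
  show ?thesis using Max_in[OF abel_card_set_finite[OF fin] ne]
    unfolding max_abelian_card_def abel_def by auto
qed

lemma max_abelian_pos:
  assumes fin: "finite (carrier G)"
  shows "max_abelian_card G \<ge> 1"
proof -
  obtain A where A: "subgroup A G" "abel G A" "card A = max_abelian_card G"
    using max_abelian_ex[OF fin] by blast
  have "\<one> \<in> A" using A(1) by (rule subgroup.one_closed)
  moreover have "finite A" using A(1) fin by (meson finite_subset subgroup.subset)
  ultimately have "card A > 0" by (auto simp: card_gt_0_iff)
  then show ?thesis using A by simp
qed

lemma tup_finite:
  assumes fin: "finite (carrier G)" and "H \<subseteq> carrier G"
  shows "finite ({0..<(n::nat)} \<rightarrow>\<^sub>E H)"
  using finite_subset[OF assms(2) fin] by (intro finite_PiE) simp_all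

lemma card_tup: "finite H \<Longrightarrow> card ({0..<(n::nat)} \<rightarrow>\<^sub>E H) = card H ^ n"
  by (simp add: card_PiE)

end

context group
begin

lemma maxab_finite:
  assumes fin: "finite (carrier G)"
  shows "finite (maxab G S)"
proof (rule finite_subset)
  show "maxab G S \<subseteq> Pow (carrier G)"
  proof
    fix A assume "A \<in> maxab G S"
    then have "subgroup A G" unfolding maxab_def by simp
    then show "A \<in> Pow (carrier G)" using subgroup.subset by blast
  qed
  show "finite (Pow (carrier G))" using fin by simp
qed

lemma maxab_inter_card:
  assumes fin: "finite (carrier G)" and A: "A \<in> maxab G S" and B: "B \<in> maxab G S" and ne: "A \<noteq> B"
  shows "card (A \<inter> B) \<le> max_abelian_card G - 1"
proof (rule ccontr)
  let ?a = "max_abelian_card G"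
  assume "\<not> ?thesis"
  then have ge: "card (A \<inter> B) \<ge> ?a" using max_abelian_pos[OF fin] by linarith
  have Aa: "card A = ?a" and Ba: "card B = ?a" using A B unfolding maxab_def by auto
  have "subgroup A G" "subgroup B G" using A B unfolding maxab_def by auto
  then have fA: "finite A" and fB: "finite B" using fin subgroup.subset finite_subset by metis+
  have "card (A \<inter> B) \<le> card A" using fA by (simp add: card_mono)
  then have "A \<inter> B = A" using card_subset_eq[OF fA, of "A \<inter> B"] ge Aa by auto
  moreover have "card (A \<inter> B) \<le> card B" using fB by (simp add: card_mono)
  then have "A \<inter> B = B" using card_subset_eq[OF fB, of "A \<inter> B"] ge Ba by auto
  ultimately show False using ne by simp
qed

lemma ctup_upper:
  assumes fin: "finite (carrier G)" and Y: "Y \<subseteq> carrier G"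
  shows "card (ctup G n (cen G Y)) \<le>
    card (maxab G (cen G Y)) * max_abelian_card G ^ n + 2 ^ card (carrier G) * (max_abelian_card G - 1) ^ n"
proof -
  let ?a = "max_abelian_card G"
  let ?S = "cen G Y"
  let ?M = "maxab G ?S"
  let ?B = "{H. H \<subseteq> carrier G \<and> card H \<le> ?a - 1}"
  let ?U1 = "\<Union>A\<in>?M. {0..<n} \<rightarrow>\<^sub>E A"
  let ?U2 = "\<Union>H\<in>?B. {0..<n} \<rightarrow>\<^sub>E H"
  have Mfin: "finite ?M" by (rule maxab_finite[OF fin])
  have Bfin: "finite ?B" by (rule finite_subset[of _ "Pow (carrier G)"]) (use fin in auto)
  have Msub: "A \<subseteq> carrier G" if "A \<in> ?M" for A
  proof -
    have "subgroup A G" using that unfolding maxab_def by simp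
    then show ?thesis by (rule subgroup.subset)
  qed
  have sub: "ctup G n ?S \<subseteq> ?U1 \<union> ?U2"
  proof
    fix x assume x: "x \<in> ctup G n ?S"
    let ?X = "x ` {0..<n}"
    have xP: "x \<in> {0..<n} \<rightarrow>\<^sub>E ?S" and xc: "\<forall>i<n. \<forall>j<n. x i \<otimes> x j = x j \<otimes> x i"
      using x unfolding ctup_def by auto
    have XS: "?X \<subseteq> ?S" using xP by auto
    have Xc: "?X \<subseteq> carrier G" using XS unfolding cen_def by auto
    have Xcomm: "\<forall>u\<in>?X. \<forall>v\<in>?X. u \<otimes> v = v \<otimes> u" using xc by auto
    let ?H = "cen G (cen G ?X)"
    have Hs: "subgroup ?H G" and XH: "?X \<subseteq> ?H" and Hab: "abel G ?H"
      using double_cen[OF Xc Xcomm] unfolding abel_def by auto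
    have HS: "?H \<subseteq> ?S" by (rule double_cen_sub[OF XS Y])
    have Ha: "card ?H \<le> ?a" by (rule max_abelian_ge[OF fin Hs Hab])
    have xH: "x \<in> {0..<n} \<rightarrow>\<^sub>E ?H" using xP XH by (auto simp: PiE_iff)
    show "x \<in> ?U1 \<union> ?U2"
    proof (cases "card ?H = ?a")
      case True
      then have "?H \<in> ?M" unfolding maxab_def using Hs Hab HS by auto
      then show ?thesis using xH by blast
    next
      case False
      then have "?H \<in> ?B" using Ha subgroup.subset[OF Hs] by auto
      then show ?thesis using xH by blast
    qed
  qed
  have f1: "finite ?U1"
  proof (rule finite_UN_I[OF Mfin])
    fix A assume "A \<in> ?M" then show "finite ({0..<n} \<rightarrow>\<^sub>E A)" using tup_finite[OF fin Msub] by blast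
  qed
  have f2: "finite ?U2"
  proof (rule finite_UN_I[OF Bfin])
    fix H assume "H \<in> ?B" then show "finite ({0..<n} \<rightarrow>\<^sub>E H)" using tup_finite[OF fin] by blast
  qed
  have c0: "card (ctup G n ?S) \<le> card (?U1 \<union> ?U2)" using f1 f2 sub by (intro card_mono) auto
  have c1: "card (?U1 \<union> ?U2) \<le> card ?U1 + card ?U2" by (rule card_Un_le)
  have u1: "card ?U1 \<le> card ?M * ?a ^ n"
  proof -
    have "card ?U1 \<le> (\<Sum>A\<in>?M. card ({0..<n} \<rightarrow>\<^sub>E A))" by (rule card_UN_le[OF Mfin])
    also have "\<dots> = (\<Sum>A\<in>?M. ?a ^ n)"
    proof (rule sum.cong[OF refl])
      fix A assume A: "A \<in> ?M"
      then have "finite A" using Msub fin by (meson finite_subset)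
      then have "card ({0..<n} \<rightarrow>\<^sub>E A) = card A ^ n" by (rule card_tup)
      then show "card ({0..<n} \<rightarrow>\<^sub>E A) = ?a ^ n" using A unfolding maxab_def by simp
    qed
    also have "\<dots> = card ?M * ?a ^ n" by simp
    finally show ?thesis .
  qed
  have u2: "card ?U2 \<le> 2 ^ card (carrier G) * (?a - 1) ^ n"
  proof -
    have "card ?U2 \<le> (\<Sum>H\<in>?B. card ({0..<n} \<rightarrow>\<^sub>E H))" by (rule card_UN_le[OF Bfin])
    also have "\<dots> \<le> (\<Sum>H\<in>?B. (?a - 1) ^ n)"
    proof (rule sum_mono)
      fix H assume H: "H \<in> ?B"
      then have "H \<subseteq> carrier G" by simp
      then have "finite H" using fin by (rule finite_subset)
      then have e: "card ({0..<n} \<rightarrow>\<^sub>E H) = card H ^ n" by (rule card_tup)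
      have "card H \<le> ?a - 1" using H by simp
      then have "card H ^ n \<le> (?a - 1) ^ n" by (rule power_mono) simp
      then show "card ({0..<n} \<rightarrow>\<^sub>E H) \<le> (?a - 1) ^ n" using e by simp
    qed
    also have "\<dots> = card ?B * (?a - 1) ^ n" by simp
    also have "\<dots> \<le> 2 ^ card (carrier G) * (?a - 1) ^ n"
    proof (rule mult_right_mono)
      have "card ?B \<le> card (Pow (carrier G))" using fin by (intro card_mono) auto
      then show "card ?B \<le> 2 ^ card (carrier G)" using fin by (simp add: card_Pow)
    qed simp
    finally show ?thesis .
  qed
  have "card ?U1 + card ?U2 \<le> card ?M * ?a ^ n + 2 ^ card (carrier G) * (?a - 1) ^ n"
    by (rule add_mono[OF u1 u2])
  then show ?thesis using c0 c1 by (meson order_trans)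
qed

end

context group
begin

lemma ctup_lower:
  assumes fin: "finite (carrier G)" and Y: "Y \<subseteq> carrier G"
  shows "real (card (maxab G (cen G Y))) * real (max_abelian_card G) ^ n
     - real (card (maxab G (cen G Y))) ^ 2 * real (max_abelian_card G - 1) ^ n
     \<le> real (card (ctup G n (cen G Y)))"
proof -
  let ?a = "max_abelian_card G"
  let ?S = "cen G Y"
  let ?M = "maxab G ?S"
  let ?m = "card ?M"
  let ?T = "\<lambda>A. {0..<n} \<rightarrow>\<^sub>E A"
  define R where "R A = (\<Union>B\<in>?M - {A}. ?T A \<inter> ?T B)" for A
  define D where "D A = ?T A - R A" for A
  have Mfin: "finite ?M" by (rule maxab_finite[OF fin])
  have Msub: "A \<subseteq> carrier G" if "A \<in> ?M" for A
  proof -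
    have "subgroup A G" using that unfolding maxab_def by simp
    then show ?thesis by (rule subgroup.subset)
  qed
  have Tfin: "finite (?T A)" if "A \<in> ?M" for A using tup_finite[OF fin Msub[OF that]] .
  have Dfin: "finite (D A)" if "A \<in> ?M" for A unfolding D_def using Tfin[OF that] by simp
  have Dsub: "(\<Union>A\<in>?M. D A) \<subseteq> ctup G n ?S"
  proof
    fix x assume "x \<in> (\<Union>A\<in>?M. D A)"
    then obtain A where A: "A \<in> ?M" and xD: "x \<in> D A" by blast
    have xT: "x \<in> ?T A" using xD unfolding D_def by simp
    have AS: "A \<subseteq> ?S" and Aab: "abel G A" using A unfolding maxab_def by auto
    have "x \<in> {0..<n} \<rightarrow>\<^sub>E ?S" using xT AS by (auto simp: PiE_iff)
    moreover have "\<forall>i<n. \<forall>j<n. x i \<otimes> x j = x j \<otimes> x i"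
      using xT Aab unfolding abel_def by (auto simp: PiE_iff)
    ultimately show "x \<in> ctup G n ?S" unfolding ctup_def by simp
  qed
  have disj: "\<forall>A\<in>?M. \<forall>A'\<in>?M. A \<noteq> A' \<longrightarrow> D A \<inter> D A' = {}"
  proof (intro ballI impI)
    fix A A' assume A: "A \<in> ?M" and A': "A' \<in> ?M" and ne: "A \<noteq> A'"
    show "D A \<inter> D A' = {}"
    proof (rule ccontr)
      assume "D A \<inter> D A' \<noteq> {}"
      then obtain x where x1: "x \<in> D A" and x2: "x \<in> D A'" by blast
      have "x \<in> ?T A" "x \<in> ?T A'" using x1 x2 unfolding D_def by auto
      then have "x \<in> R A" unfolding R_def using A' ne by blast
      then show False using x1 unfolding D_def by simp
    qed
  qed
  have Dcard: "real ?a ^ n - real ?m * real (?a - 1) ^ n \<le> real (card (D A))" if A: "A \<in> ?M" for A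
  proof -
    have Rfin: "finite (R A)" unfolding R_def using Mfin Tfin[OF A] by auto
    have TA: "card (?T A) = ?a ^ n"
    proof -
      have "finite A" using Msub[OF A] fin by (rule finite_subset)
      then have "card (?T A) = card A ^ n" by (rule card_tup)
      then show ?thesis using A unfolding maxab_def by simp
    qed
    have "card (R A) \<le> (\<Sum>B\<in>?M - {A}. card (?T A \<inter> ?T B))"
      unfolding R_def by (rule card_UN_le) (use Mfin in simp)
    also have "\<dots> \<le> (\<Sum>B\<in>?M - {A}. (?a - 1) ^ n)"
    proof (rule sum_mono)
      fix B assume B: "B \<in> ?M - {A}"
      have "?T A \<inter> ?T B = ?T (A \<inter> B)" by (simp add: PiE_Int)
      moreover have "finite (A \<inter> B)" using Msub[OF A] fin by (meson finite_subset inf_le1 order_trans)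
      ultimately have e: "card (?T A \<inter> ?T B) = card (A \<inter> B) ^ n" using card_tup by simp
      have "card (A \<inter> B) \<le> ?a - 1" using maxab_inter_card[OF fin A, of B] B by auto
      then have "card (A \<inter> B) ^ n \<le> (?a - 1) ^ n" by (rule power_mono) simp
      then show "card (?T A \<inter> ?T B) \<le> (?a - 1) ^ n" using e by simp
    qed
    also have "\<dots> = card (?M - {A}) * (?a - 1) ^ n" by simp
    also have "\<dots> \<le> ?m * (?a - 1) ^ n"
      by (rule mult_right_mono) (use Mfin in \<open>simp_all add: card_mono\<close>)
    finally have Rc: "card (R A) \<le> ?m * (?a - 1) ^ n" .
    have "card (?T A) - card (R A) \<le> card (D A)" unfolding D_def by (rule diff_card_le_card_Diff[OF Rfin])
    then have "card (?T A) \<le> card (D A) + card (R A)" by linarith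
    then have "real (card (?T A)) \<le> real (card (D A)) + real (card (R A))" by linarith
    moreover have "real (card (R A)) \<le> real ?m * real (?a - 1) ^ n"
      using Rc by (metis of_nat_le_iff of_nat_mult of_nat_power)
    ultimately show ?thesis using TA by simp
  qed
  have "real ?m * real ?a ^ n - real ?m ^ 2 * real (?a - 1) ^ n =
      (\<Sum>A\<in>?M. real ?a ^ n - real ?m * real (?a - 1) ^ n)"
    by (simp add: power2_eq_square algebra_simps)
  also have "\<dots> \<le> (\<Sum>A\<in>?M. real (card (D A)))" by (rule sum_mono) (rule Dcard)
  also have "\<dots> = real (card (\<Union>A\<in>?M. D A))"
    using card_UN_disjoint[OF Mfin _ disj] Dfin by simp
  also have "\<dots> \<le> real (card (ctup G n ?S))"
  proof -
    have "finite (ctup G n ?S)"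
    proof (rule finite_subset)
      show "ctup G n ?S \<subseteq> {0..<n} \<rightarrow>\<^sub>E ?S" unfolding ctup_def by auto
      show "finite ({0..<n} \<rightarrow>\<^sub>E ?S)" by (rule tup_finite[OF fin]) (auto simp: cen_def)
    qed
    then show ?thesis using Dsub by (simp add: card_mono)
  qed
  finally show ?thesis .
qed

end

context group
begin

lemma ctup_limit:
  assumes fin: "finite (carrier G)" and Y: "Y \<subseteq> carrier G"
  shows "(\<lambda>n. real (card (ctup G n (cen G Y))) / real (max_abelian_card G) ^ n)
     \<longlonglongrightarrow> real (card (maxab G (cen G Y)))"
proof -
  define a where "a = real (max_abelian_card G)"
  define b where "b = real (max_abelian_card G - 1)"
  define m where "m = real (card (maxab G (cen G Y)))"
  define K where "K = real ((2::nat) ^ card (carrier G))"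
  define r where "r = b / a"
  have a1: "max_abelian_card G \<ge> 1" by (rule max_abelian_pos[OF fin])
  have apos: "a > 0" unfolding a_def using a1 by simp
  have bdef: "b = a - 1" unfolding a_def b_def using a1 by (simp add: of_nat_diff)
  have r0: "0 \<le> r" unfolding r_def b_def a_def by simp
  have r1: "r < 1" unfolding r_def using apos bdef by simp
  have rlim: "(\<lambda>n. r ^ n) \<longlonglongrightarrow> 0" by (rule LIMSEQ_realpow_zero[OF r0 r1])
  have low_lim: "(\<lambda>n. m - m\<^sup>2 * r ^ n) \<longlonglongrightarrow> m"
    using tendsto_diff[OF tendsto_const tendsto_mult[OF tendsto_const rlim], of m "m\<^sup>2"] by simp
  have up_lim: "(\<lambda>n. m + K * r ^ n) \<longlonglongrightarrow> m"
    using tendsto_add[OF tendsto_const tendsto_mult[OF tendsto_const rlim], of m K] by simp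
  have rn: "r ^ n = b ^ n / a ^ n" for n unfolding r_def by (simp add: power_divide)
  have low: "m - m\<^sup>2 * r ^ n \<le> real (card (ctup G n (cen G Y))) / a ^ n" for n
  proof -
    have an: "a ^ n > 0" using apos by simp
    have "m * a ^ n - m\<^sup>2 * b ^ n \<le> real (card (ctup G n (cen G Y)))"
      using ctup_lower[OF fin Y, of n] unfolding m_def a_def b_def .
    then have "(m * a ^ n - m\<^sup>2 * b ^ n) / a ^ n \<le> real (card (ctup G n (cen G Y))) / a ^ n"
      using an by (simp add: divide_right_mono)
    moreover have "(m * a ^ n - m\<^sup>2 * b ^ n) / a ^ n = m - m\<^sup>2 * r ^ n"
      using an apos unfolding rn by (simp add: diff_divide_distrib)
    ultimately show ?thesis by simp
  qed
  have up: "real (card (ctup G n (cen G Y))) / a ^ n \<le> m + K * r ^ n" for n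
  proof -
    have an: "a ^ n > 0" using apos by simp
    have "card (ctup G n (cen G Y)) \<le>
      card (maxab G (cen G Y)) * max_abelian_card G ^ n + 2 ^ card (carrier G) * (max_abelian_card G - 1) ^ n"
      by (rule ctup_upper[OF fin Y])
    then have "real (card (ctup G n (cen G Y))) \<le> real (card (maxab G (cen G Y)) * max_abelian_card G ^ n + 2 ^ card (carrier G) * (max_abelian_card G - 1) ^ n)"
      by (simp only: of_nat_le_iff)
    also have "\<dots> = m * a ^ n + K * b ^ n" unfolding m_def a_def b_def K_def by simp
    finally have "real (card (ctup G n (cen G Y))) / a ^ n \<le> (m * a ^ n + K * b ^ n) / a ^ n"
      using an by (simp add: divide_right_mono)
    moreover have "(m * a ^ n + K * b ^ n) / a ^ n = m + K * r ^ n"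
      using an apos unfolding rn by (simp add: add_divide_distrib)
    ultimately show ?thesis by simp
  qed
  have "(\<lambda>n. real (card (ctup G n (cen G Y))) / a ^ n) \<longlonglongrightarrow> m"
    by (rule tendsto_sandwich[OF always_eventually always_eventually low_lim up_lim]) (use low up in auto)
  then show ?thesis unfolding a_def m_def .
qed

lemma beta_limit:
  assumes fin: "finite (carrier G)"
  shows "\<exists>C::real. C > 0 \<and>
           (\<lambda>n. real (beta G n) / (C * real (max_abelian_card G) ^ n)) \<longlonglongrightarrow> 1"
proof -
  define N where "N = real (card (carrier G))"
  define a where "a = real (max_abelian_card G)"
  define ms where "ms = (\<Sum>g\<in>carrier G. real (card (maxab G (cen G {g}))))"
  have Npos: "N > 0" unfolding N_def using fin by (auto simp: card_gt_0_iff)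
  have apos: "a > 0" unfolding a_def using max_abelian_pos[OF fin] by simp
  have cen1: "cen G {\<one>} = carrier G" unfolding cen_def by auto
  obtain A where A: "subgroup A G" "abel G A" "card A = max_abelian_card G"
    using max_abelian_ex[OF fin] by blast
  have "A \<subseteq> carrier G" using A(1) by (rule subgroup.subset)
  then have "A \<in> maxab G (cen G {\<one>})" unfolding maxab_def cen1 using A by auto
  then have "card (maxab G (cen G {\<one>})) > 0"
    using maxab_finite[OF fin] by (auto simp: card_gt_0_iff)
  then have "real (card (maxab G (cen G {\<one>}))) \<ge> 1" by simp
  moreover have "real (card (maxab G (cen G {\<one>}))) \<le> ms"
    unfolding ms_def by (rule member_le_sum) (use fin in auto)
  ultimately have mspos: "ms > 0" by simp
  define C where "C = ms / N"
  have Cpos: "C > 0" unfolding C_def using mspos Npos by simp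
  have lim: "(\<lambda>n. \<Sum>g\<in>carrier G. real (card (ctup G n (cen G {g}))) / a ^ n) \<longlonglongrightarrow> ms"
    unfolding ms_def a_def by (rule tendsto_sum) (rule ctup_limit[OF fin], simp)
  have lim2: "(\<lambda>n. (\<Sum>g\<in>carrier G. real (card (ctup G n (cen G {g}))) / a ^ n) / ms) \<longlonglongrightarrow> 1"
    using tendsto_divide[OF lim tendsto_const, of ms] mspos by simp
  have eq: "real (beta G n) / (C * a ^ n) = (\<Sum>g\<in>carrier G. real (card (ctup G n (cen G {g}))) / a ^ n) / ms" for n
  proof -
    have "real (beta G n) * N = real (beta G n * card (carrier G))" unfolding N_def by simp
    also have "\<dots> = real (\<Sum>g\<in>carrier G. card (ctup G n (cen G {g})))"
      by (simp only: beta_formula[OF fin])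
    also have "\<dots> = (\<Sum>g\<in>carrier G. real (card (ctup G n (cen G {g}))))" by simp
    finally have b: "real (beta G n) * N = (\<Sum>g\<in>carrier G. real (card (ctup G n (cen G {g}))))" .
    have an: "a ^ n > 0" using apos by simp
    have "real (beta G n) / (C * a ^ n) = real (beta G n) * N / (ms * a ^ n)"
      unfolding C_def using Npos by (simp add: field_simps)
    also have "\<dots> = (\<Sum>g\<in>carrier G. real (card (ctup G n (cen G {g})))) / (ms * a ^ n)" using b by simp
    also have "\<dots> = (\<Sum>g\<in>carrier G. real (card (ctup G n (cen G {g}))) / a ^ n) / ms"
      by (simp add: sum_divide_distrib[symmetric] mult.commute)
    finally show ?thesis .
  qed
  have "(\<lambda>n. real (beta G n) / (C * a ^ n)) \<longlonglongrightarrow> 1" unfolding eq by (rule lim2)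
  then show ?thesis using Cpos unfolding a_def by blast
qed

end

theorem theorem3p1:
  fixes G :: "('a, 'b) monoid_scheme"
  assumes "group G" and "finite (carrier G)"
  shows "((\<lambda>n. real (alpha G n) /
            (real (card (grp_center G)) * real (card (carrier G)) ^ (n - 1)))
           \<longlonglongrightarrow> 1) \<and>
         (\<exists>C::real. C > 0 \<and>
           (\<lambda>n. real (beta G n) / (C * real (max_abelian_card G) ^ n)) \<longlonglongrightarrow> 1)"
  using group.alpha_limit[OF assms] group.beta_limit[OF assms] by blast

end
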